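(* Let $p\in\mathcal P$. If $\mu(p)\ge\mu_a$, then $\Gamma_{\mu(p)}(p)$ is acyclic. In particular, if $n\in\{2,3\}$, then $\Gamma_{\mu(p)}(p)$ is acyclic for every $p\in\mathcal P$.
   Context: Let $n,h\ge2$, $N=\{1,\dots,n\}$, $H=\{1,\dots,h\}$, $\mathcal P$ the set of $h$-tuples of linear orders on $N$; $x>_{p_i}y$ means $x\neq y$ and $p_i$ ranks $x$ above $y$; for an integer $\mu\in(h/2,h]$, $x>^p_\mu y$ means $|\{i: x>_{p_i}y\}|\ge\mu$; $D_\mu(p)=\{x\in N: \forall y,\ |\{i: y>_{p_i}x\}|<\mu\}$; $\mu(p)=\min\{\mu\in\mathbb N\cap(h/2,h]: D_\mu(p)\ne\varnothing\}$. The acyclicity threshold is $\mu_a=\min\{m\in\mathbb N\cap(h/2,h]: m>\frac{n-2}{n-1}h\}$. $\Gamma_\mu(p)$ is the directed graph $(N,\{(x,y): x>^p_\mu y\})$; it is acyclic if it contains no directed cycle on $l\ge2$ distinct vertices as a subgraph. *)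

theory Defs
  imports Complex_Main
begin

text \<open>A profile assigns to each voter
  i a linear order p i on N, written as a (reflexive) relation: (x,y) \<in> p i
  means that voter i ranks x at least as high as y.\<close>

definition profiles :: "nat \<Rightarrow> nat \<Rightarrow> (nat \<Rightarrow> nat rel) set" where
  "profiles n h = {p. \<forall>i\<in>{1..h}. linear_order_on {1..n} (p i)}"

definition pref :: "nat rel \<Rightarrow> nat \<Rightarrow> nat \<Rightarrow> bool" where
  "pref r x y \<longleftrightarrow> x \<noteq> y \<and> (x, y) \<in> r"

definition nprefs :: "nat \<Rightarrow> (nat \<Rightarrow> nat rel) \<Rightarrow> nat \<Rightarrow> nat \<Rightarrow> nat" where
  "nprefs h p x y = card {i \<in> {1..h}. pref (p i) x y}"

definition maj :: "nat \<Rightarrow> (nat \<Rightarrow> nat rel) \<Rightarrow> nat \<Rightarrow> nat \<Rightarrow> nat \<Rightarrow> bool" where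
  "maj h p mu x y \<longleftrightarrow> nprefs h p x y \<ge> mu"

definition Dmu :: "nat \<Rightarrow> nat \<Rightarrow> (nat \<Rightarrow> nat rel) \<Rightarrow> nat \<Rightarrow> nat set" where
  "Dmu n h p mu = {x \<in> {1..n}. \<forall>y\<in>{1..n}. nprefs h p y x < mu}"

definition mu_of :: "nat \<Rightarrow> nat \<Rightarrow> (nat \<Rightarrow> nat rel) \<Rightarrow> nat" where
  "mu_of n h p = (LEAST mu. real h / 2 < real mu \<and> mu \<le> h \<and> Dmu n h p mu \<noteq> {})"

definition mu_a :: "nat \<Rightarrow> nat \<Rightarrow> nat" where
  "mu_a n h = (LEAST m. real h / 2 < real m \<and> m \<le> h \<and>
                  real m > (real n - 2) / (real n - 1) * real h)"

definition Gamma :: "nat \<Rightarrow> nat \<Rightarrow> (nat \<Rightarrow> nat rel) \<Rightarrow> nat \<Rightarrow> nat rel" where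
  "Gamma n h p mu = {(x, y). x \<in> {1..n} \<and> y \<in> {1..n} \<and> maj h p mu x y}"

definition acyclic_graph :: "'a set \<Rightarrow> 'a rel \<Rightarrow> bool" where
  "acyclic_graph V E \<longleftrightarrow> \<not> (\<exists>xs. 2 \<le> length xs \<and> distinct xs \<and> set xs \<subseteq> V \<and>
       (\<forall>j < length xs - 1. (xs ! j, xs ! (j + 1)) \<in> E) \<and> (last xs, hd xs) \<in> E)"

end

theory Submission
  imports Defs
begin

lemma voter_no_cycle:
  assumes lo: "linear_order_on {1..n} r" and l: "length xs = l" "2 \<le> l"
    and d: "distinct xs" and s: "set xs \<subseteq> {1..n}"
    and c: "\<forall>j<l. pref r (xs!j) (xs!((j+1) mod l))"
  shows False
proof -
  have refl: "refl_on {1..n} r" and tr: "trans r" and an: "antisym r"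
    using lo unfolding linear_order_on_def partial_order_on_def preorder_on_def by auto
  have chain: "k < l \<longrightarrow> (xs!0, xs!k) \<in> r" for k
  proof (induction k)
    case 0
    have "xs!0 \<in> set xs" using l by (intro nth_mem) auto
    then have "xs!0 \<in> {1..n}" using s by auto
    then show ?case using refl by (auto simp: refl_on_def)
  next
    case (Suc k)
    show ?case
    proof
      assume "Suc k < l"
      then have 1: "(xs!0, xs!k) \<in> r" using Suc by auto
      have "pref r (xs!k) (xs!((k+1) mod l))" using c[rule_format, of k] \<open>Suc k < l\<close> by simp
      moreover have "(k+1) mod l = Suc k" using \<open>Suc k < l\<close> by simp
      ultimately have "pref r (xs!k) (xs!(Suc k))" by simp
      then have "(xs!k, xs!(Suc k)) \<in> r" by (auto simp: pref_def)
      with 1 show "(xs!0, xs!Suc k) \<in> r" using tr by (meson transE)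
    qed
  qed
  have a: "(xs!0, xs!(l-1)) \<in> r" using chain[of "l-1"] l by auto
  have "pref r (xs!(l-1)) (xs!((l-1+1) mod l))" using c[rule_format, of "l-1"] l by simp
  moreover have "(l-1+1) mod l = 0" using l by simp
  ultimately have "pref r (xs!(l-1)) (xs!0)" by simp
  then have b: "(xs!(l-1), xs!0) \<in> r" "xs!(l-1) \<noteq> xs!0" by (auto simp: pref_def)
  from a b an show False by (auto simp: antisym_def)
qed

lemma card_filter_sum: "finite A \<Longrightarrow> card {x\<in>A. P x} = (\<Sum>x\<in>A. if P x then 1 else 0)"
  by (simp add: sum.If_cases Int_def)

lemma cycle_bound:
  assumes p: "p \<in> profiles n h" and l: "length xs = l" "2 \<le> l"
    and d: "distinct xs" and s: "set xs \<subseteq> {1..n}"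
    and c: "\<forall>j<l. maj h p mu (xs!j) (xs!((j+1) mod l))"
  shows "l * mu \<le> (l - 1) * h"
proof -
  define P where "P i j \<longleftrightarrow> pref (p i) (xs!j) (xs!((j+1) mod l))" for i j
  have "l * mu = (\<Sum>j<l. mu)" by simp
  also have "\<dots> \<le> (\<Sum>j<l. card {i\<in>{1..h}. P i j})"
    using c by (intro sum_mono) (auto simp: maj_def nprefs_def P_def)
  also have "\<dots> = (\<Sum>j<l. \<Sum>i\<in>{1..h}. if P i j then 1 else 0)"
    by (rule sum.cong[OF refl], rule card_filter_sum) simp
  also have "\<dots> = (\<Sum>i\<in>{1..h}. \<Sum>j<l. if P i j then 1 else 0)"
    by (rule sum.swap)
  also have "\<dots> = (\<Sum>i\<in>{1..h}. card {j\<in>{..<l}. P i j})"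
    by (rule sum.cong[OF refl], rule card_filter_sum[symmetric]) simp
  also have "\<dots> \<le> (\<Sum>i\<in>{1..h}. l - 1)"
  proof (intro sum_mono)
    fix i assume i: "i \<in> {1..h}"
    have lo: "linear_order_on {1..n} (p i)" using p i by (auto simp: profiles_def)
    obtain j0 where j0: "j0 < l" "\<not> P i j0"
      using voter_no_cycle[OF lo l d s] unfolding P_def by blast
    have "{j\<in>{..<l}. P i j} \<subseteq> {..<l} - {j0}" using j0 by auto
    then have "card {j\<in>{..<l}. P i j} \<le> card ({..<l} - {j0})" by (intro card_mono) auto
    also have "\<dots> = l - 1" using j0 by simp
    finally show "card {j\<in>{..<l}. P i j} \<le> l - 1" .
  qed
  also have "\<dots> = (l - 1) * h" by simp
  finally show ?thesis .
qed

lemma mu_of_props: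
  assumes p: "p \<in> profiles n h" and n: "n \<ge> 2" and h: "h \<ge> 2"
  shows "real h / 2 < real (mu_of n h p) \<and> mu_of n h p \<le> h \<and> Dmu n h p (mu_of n h p) \<noteq> {}"
proof -
  have lo: "linear_order_on {1..n} (p 1)" using p h by (auto simp: profiles_def)
  have "finite {1..n}" by simp
  have "{1..n} \<noteq> {}" using n by auto
  have "\<exists>x\<in>{1..n}. \<forall>y\<in>{1..n}. (x, y) \<in> p 1"
  proof -
    have tot: "total_on {1..n} (p 1)" and refl: "refl_on {1..n} (p 1)" and tr: "trans (p 1)"
      using lo unfolding linear_order_on_def partial_order_on_def preorder_on_def by auto
    have "\<forall>A. finite A \<longrightarrow> A \<noteq> {} \<longrightarrow> A \<subseteq> {1..n} \<longrightarrow> (\<exists>x\<in>A. \<forall>y\<in>A. (x, y) \<in> p 1)"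
    proof (intro allI impI)
      fix A :: "nat set" assume "finite A" "A \<noteq> {}" "A \<subseteq> {1..n}"
      then show "\<exists>x\<in>A. \<forall>y\<in>A. (x, y) \<in> p 1"
      proof (induction A rule: finite_ne_induct)
        case (singleton x) then show ?case using refl by (auto simp: refl_on_def)
      next
        case (insert a F)
        then obtain x where x: "x \<in> F" "\<forall>y\<in>F. (x, y) \<in> p 1" by auto
        have ax: "a \<in> {1..n}" "x \<in> {1..n}" using insert x by auto
        show ?case
        proof (cases "(x, a) \<in> p 1")
          case True then show ?thesis using x ax refl by (auto simp: refl_on_def)
        next
          case False
          have "a \<noteq> x" using insert x by auto
          then have "(a, x) \<in> p 1" using tot ax False unfolding total_on_def by blast
          then have "\<forall>y\<in>F. (a, y) \<in> p 1" using x tr by (meson transE)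
          then show ?thesis using ax refl by (auto simp: refl_on_def)
        qed
      qed
    qed
    then show ?thesis using \<open>{1..n} \<noteq> {}\<close> by blast
  qed
  then obtain x where x: "x \<in> {1..n}" "\<forall>y\<in>{1..n}. (x, y) \<in> p 1" by blast
  have "x \<in> Dmu n h p h"
  proof -
    have "nprefs h p y x < h" if y: "y \<in> {1..n}" for y
    proof -
      have "{i \<in> {1..h}. pref (p i) y x} \<subseteq> {1..h} - {1}"
      proof
        fix i assume i: "i \<in> {i \<in> {1..h}. pref (p i) y x}"
        show "i \<in> {1..h} - {1}"
        proof (rule ccontr)
          assume "i \<notin> {1..h} - {1}"
          then have "i = 1" using i by auto
          then have "(y, x) \<in> p 1" "y \<noteq> x" using i by (auto simp: pref_def)
          moreover have "(x, y) \<in> p 1" using x y by auto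
          moreover have "antisym (p 1)" using lo
            unfolding linear_order_on_def partial_order_on_def by auto
          ultimately show False by (auto simp: antisym_def)
        qed
      qed
      then have "nprefs h p y x \<le> card ({1..h} - {1})" unfolding nprefs_def
        by (intro card_mono) auto
      also have "\<dots> < h" using h by simp
      finally show ?thesis .
    qed
    then show ?thesis using x by (auto simp: Dmu_def)
  qed
  then have ex: "real h / 2 < real h \<and> h \<le> h \<and> Dmu n h p h \<noteq> {}" using h by auto
  show ?thesis unfolding mu_of_def
    by (rule LeastI[of "\<lambda>mu. real h / 2 < real mu \<and> mu \<le> h \<and> Dmu n h p mu \<noteq> {}" h, OF ex])
qed

theorem corollary7:
  fixes n h :: nat
  assumes "n \<ge> 2" and "h \<ge> 2"
  shows "(\<forall>p \<in> profiles n h. mu_of n h p \<ge> mu_a n h \<longrightarrow>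
            acyclic_graph {1..n} (Gamma n h p (mu_of n h p)))
       \<and> (n \<in> {2, 3} \<longrightarrow>
            (\<forall>p \<in> profiles n h. acyclic_graph {1..n} (Gamma n h p (mu_of n h p))))"
proof -
  have n1: "real n - 1 > 0" using assms by simp
  have mua: "real (mu_a n h) > (real n - 2) / (real n - 1) * real h"
  proof -
    have "(real n - 2) / (real n - 1) * real h < real h"
      using n1 assms by (simp add: field_simps)
    then have ex: "real h / 2 < real h \<and> h \<le> h \<and> real h > (real n - 2) / (real n - 1) * real h"
      using assms by auto
    show ?thesis unfolding mu_a_def using LeastI[of "\<lambda>m. real h / 2 < real m \<and> m \<le> h \<and>
                  real m > (real n - 2) / (real n - 1) * real h" h, OF ex] by blast
  qed
  have main: "acyclic_graph {1..n} (Gamma n h p (mu_of n h p))"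
    if p: "p \<in> profiles n h" and ge: "mu_of n h p \<ge> mu_a n h" for p
  proof -
    let ?mu = "mu_of n h p"
    obtain props: "real h / 2 < real ?mu" "?mu \<le> h" "Dmu n h p ?mu \<noteq> {}"
      using mu_of_props[OF p assms] by blast
    obtain x where x: "x \<in> Dmu n h p ?mu" using props by blast
    have mureal: "real ?mu * (real n - 1) > (real n - 2) * real h"
    proof -
      have "real ?mu > (real n - 2) / (real n - 1) * real h" using mua ge by linarith
      then show ?thesis using n1 by (simp add: field_simps)
    qed
    show ?thesis unfolding acyclic_graph_def
    proof
      assume "\<exists>xs. 2 \<le> length xs \<and> distinct xs \<and> set xs \<subseteq> {1..n} \<and>
       (\<forall>j < length xs - 1. (xs ! j, xs ! (j + 1)) \<in> Gamma n h p ?mu) \<and> (last xs, hd xs) \<in> Gamma n h p ?mu"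
      then obtain xs where l: "2 \<le> length xs" and d: "distinct xs" and s: "set xs \<subseteq> {1..n}"
        and e1: "\<forall>j < length xs - 1. (xs ! j, xs ! (j + 1)) \<in> Gamma n h p ?mu"
        and e2: "(last xs, hd xs) \<in> Gamma n h p ?mu" by blast
      define l where "l = length xs"
      have c: "\<forall>j<l. (xs!j, xs!((j+1) mod l)) \<in> Gamma n h p ?mu"
      proof (intro allI impI)
        fix j assume j: "j < l"
        show "(xs!j, xs!((j+1) mod l)) \<in> Gamma n h p ?mu"
        proof (cases "j < l - 1")
          case True then show ?thesis using e1 l_def by auto
        next
          case False
          then have jl: "j = l - 1" using j by auto
          have "xs \<noteq> []" using l by auto
          then have "last xs = xs!(l-1)" "hd xs = xs!0" using l_def
            by (auto simp: last_conv_nth hd_conv_nth)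
          moreover have "j+1 = l" using jl l l_def by simp
          then have "(j+1) mod l = 0" by simp
          ultimately show ?thesis using e2 jl \<open>(j+1) mod l = 0\<close> by simp
        qed
      qed
      have cm: "\<forall>j<l. maj h p ?mu (xs!j) (xs!((j+1) mod l))" using c by (auto simp: Gamma_def)
      have bound: "l * ?mu \<le> (l - 1) * h"
        by (rule cycle_bound[OF p l_def[symmetric] _ d s cm]) (use l l_def in auto)
      have "x \<notin> set xs"
      proof
        assume "x \<in> set xs"
        then obtain k where k: "k < l" "xs!k = x" using l_def by (auto simp: in_set_conv_nth)
        define j where "j = (if k = 0 then l - 1 else k - 1)"
        have "j < l" using k l l_def j_def by auto
        have "j + 1 = (if k = 0 then l else k)" using k l l_def j_def by auto
        then have "(j + 1) mod l = k" using k by auto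
        then have "(xs!j, x) \<in> Gamma n h p ?mu" using c \<open>j < l\<close> k by metis
        then have "nprefs h p (xs!j) x \<ge> ?mu" "xs!j \<in> {1..n}" by (auto simp: Gamma_def maj_def)
        moreover have "nprefs h p (xs!j) x < ?mu" if "xs!j \<in> {1..n}"
          using x that by (auto simp: Dmu_def)
        ultimately show False by auto
      qed
      moreover have "x \<in> {1..n}" using x by (auto simp: Dmu_def)
      ultimately have "set xs \<subseteq> {1..n} - {x}" using s by auto
      then have "card (set xs) \<le> card ({1..n} - {x})" by (intro card_mono) auto
      then have lle: "l \<le> n - 1" using d l_def \<open>x \<in> {1..n}\<close> by (simp add: distinct_card)
      have b2: "l * ?mu \<le> l * h - h" using bound by (simp add: diff_mult_distrib)
      have b3: "h \<le> l * h" using l l_def by simp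
      have "l * (h - ?mu) = l * h - l * ?mu" by (simp add: diff_mult_distrib2)
      moreover have "h \<le> l * h - l * ?mu" using b2 b3 by linarith
      ultimately have "l * (h - ?mu) \<ge> h" by simp
      then have "(n - 1) * (h - ?mu) \<ge> h" using lle
        by (meson le_trans mult_le_mono1)
      then have "real (n - 1) * (real h - real ?mu) \<ge> real h"
        using props by (metis of_nat_diff of_nat_le_iff of_nat_mult)
      then show False using mureal assms by (simp add: of_nat_diff algebra_simps)
    qed
  qed
  have part2: "mu_of n h p \<ge> mu_a n h" if p: "p \<in> profiles n h" and n23: "n \<in> {2,3}" for p
  proof -
    obtain props: "real h / 2 < real (mu_of n h p)" "mu_of n h p \<le> h"
      using mu_of_props[OF p assms] by blast
    have "(real n - 2) / (real n - 1) * real h \<le> real h / 2" using n23 by auto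
    then have "(real n - 2) / (real n - 1) * real h < real (mu_of n h p)" using props by linarith
    then show ?thesis unfolding mu_a_def using props by (intro Least_le) auto
  qed
  show ?thesis using main part2 by blast
qed

end
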